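(* Let $A:\mathbb{R}^d\rightrightarrows\mathbb{R}^d$ be maximally monotone and $B:\mathbb{R}^d\to\mathbb{R}^d$ be $L_B$-Lipschitz and $\mu$-strongly monotone with $\mu>0$, and suppose $z^\star\in(A+B)^{-1}(0)$ exists. Let $\widetilde B$ be a stochastic oracle with $\mathbb{E}[\widetilde B(x)]=B(x)$ and $\mathbb{E}\|\widetilde B(x)-B(x)\|^2\le\sigma^2$. Starting from $z_0\in\mathbb{R}^d$, consider for $t=0,\dots,T-1$, with $\tau_t=\frac{2}{(t+1)\mu+6L_B}$, $$z_{t+1/2}=J_{\tau_tA}(z_t-\tau_t\widetilde B(z_t)),\qquad z_{t+1}=z_{t+1/2}+\tau_t\widetilde B(z_t)-\tau_t\widetilde B(z_{t+1/2}),$$ where each evaluation of $\widetilde B$ uses an independent sample. Then $$\mathbb{E}\|z_T-z^\star\|^2\le\frac{\frac{6L_B}{\mu}\|z_0-z^\star\|^2+\frac{48\sigma^2}{\mu^2}}{T+\frac{6L_B}{\mu}}.$$ Each iteration uses two evaluations of $\widetilde B$ and one resolvent of $A$.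
   Context: For an operator $A$, $J_A=(\mathrm{Id}+A)^{-1}$. $B$ is $\mu$-strongly monotone if $\langle B(x)-B(y),x-y\rangle\ge\mu\|x-y\|^2$ for all $x,y$. *)

theory Defs
  imports "HOL-Analysis.Analysis" "HOL-Probability.Probability"
begin

definition monotone_op :: "('a::real_inner \<Rightarrow> 'a set) \<Rightarrow> bool" where
  "monotone_op A \<longleftrightarrow>
     (\<forall>x y u v. u \<in> A x \<longrightarrow> v \<in> A y \<longrightarrow> inner (u - v) (x - y) \<ge> 0)"

definition maximal_monotone :: "('a::real_inner \<Rightarrow> 'a set) \<Rightarrow> bool" where
  "maximal_monotone A \<longleftrightarrow> monotone_op A \<and>
     (\<forall>A'. monotone_op A' \<and> (\<forall>x. A x \<subseteq> A' x) \<longrightarrow> A' = A)"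

definition strongly_monotone :: "real \<Rightarrow> ('a::real_inner \<Rightarrow> 'a) \<Rightarrow> bool" where
  "strongly_monotone \<mu> B \<longleftrightarrow>
     (\<forall>x y. inner (B x - B y) (x - y) \<ge> \<mu> * (norm (x - y))\<^sup>2)"

definition scale_op :: "real \<Rightarrow> ('a::real_vector \<Rightarrow> 'a set) \<Rightarrow> 'a \<Rightarrow> 'a set" where
  "scale_op \<tau> A = (\<lambda>p. (\<lambda>v. \<tau> *\<^sub>R v) ` A p)"

text \<open>Resolvent \<open>J_A = (Id + A)^{-1}\<close> as a set-valued map:
  \<open>p \<in> J_A x \<longleftrightarrow> x \<in> p + A p\<close>.\<close>
definition resolvent :: "('a::real_vector \<Rightarrow> 'a set) \<Rightarrow> 'a \<Rightarrow> 'a set" where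
  "resolvent A x = {p. x - p \<in> A p}"

end

theory Submission
  imports Defs
begin


definition past :: "'w measure \<Rightarrow> (nat \<Rightarrow> 'w \<Rightarrow> 's) \<Rightarrow> 's measure \<Rightarrow> nat \<Rightarrow> 'w measure" where
  "past M \<xi> S n = vimage_algebra (space M) (\<lambda>\<omega>. \<lambda>i\<in>{..<n}. \<xi> i \<omega>) (PiM {..<n} (\<lambda>_. S))"

lemma indep_fubini:
  assumes prob: "prob_space M"
  and rX: "X \<in> measurable M P" and rY: "Y \<in> measurable M S"
  and ind: "prob_space.indep_set M {X -` A \<inter> space M | A. A \<in> sets P} {Y -` A \<inter> space M | A. A \<in> sets S}"
  and h: "h \<in> borel_measurable (P \<Otimes>\<^sub>M S)"
  shows "(\<integral>\<^sup>+\<omega>. h (X \<omega>, Y \<omega>) \<partial>M) = (\<integral>\<^sup>+\<omega>. (\<integral>\<^sup>+\<omega>'. h (X \<omega>, Y \<omega>') \<partial>M) \<partial>M)"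
proof -
  interpret prob_space M by (rule prob)
  have XY: "(\<lambda>x. (X x, Y x)) \<in> measurable M (P \<Otimes>\<^sub>M S)" using rX rY by (rule measurable_Pair)
  interpret PX: prob_space "distr M P X" by (rule prob_space_distr[OF rX])
  interpret PY: prob_space "distr M S Y" by (rule prob_space_distr[OF rY])
  interpret XY: pair_prob_space "distr M P X" "distr M S Y" ..
  have eq: "distr M P X \<Otimes>\<^sub>M distr M S Y = distr M (P \<Otimes>\<^sub>M S) (\<lambda>x. (X x, Y x))"
  proof (rule pair_measure_eqI)
    show "sigma_finite_measure (distr M P X)" ..
    show "sigma_finite_measure (distr M S Y)" ..
    fix A B assume A: "A \<in> sets (distr M P X)" and B: "B \<in> sets (distr M S Y)"
    have "emeasure (distr M (P \<Otimes>\<^sub>M S) (\<lambda>x. (X x, Y x))) (A \<times> B) = emeasure M ((\<lambda>x. (X x, Y x)) -` (A \<times> B) \<inter> space M)"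
      using A B by (intro emeasure_distr[OF XY]) auto
    also have "(\<lambda>x. (X x, Y x)) -` (A \<times> B) \<inter> space M = (X -` A \<inter> space M) \<inter> (Y -` B \<inter> space M)" by auto
    also have "emeasure M \<dots> = emeasure M (X -` A \<inter> space M) * emeasure M (Y -` B \<inter> space M)"
    proof -
      have "prob ((X -` A \<inter> space M) \<inter> (Y -` B \<inter> space M)) = prob (X -` A \<inter> space M) * prob (Y -` B \<inter> space M)"
        by (rule indep_setD[OF ind]) (use A B in auto)
      then show ?thesis by (simp add: emeasure_eq_measure measure_nonneg ennreal_mult)
    qed
    also have "\<dots> = emeasure (distr M P X) A * emeasure (distr M S Y) B"
      using rX rY A B by (simp add: emeasure_distr)
    finally show "emeasure (distr M P X) A * emeasure (distr M S Y) B = emeasure (distr M (P \<Otimes>\<^sub>M S) (\<lambda>x. (X x, Y x))) (A \<times> B)" by simp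
  qed simp
  have h': "h \<in> borel_measurable (distr M P X \<Otimes>\<^sub>M distr M S Y)"
    using h by (simp cong: measurable_cong_sets)
  have "(\<integral>\<^sup>+\<omega>. h (X \<omega>, Y \<omega>) \<partial>M) = (\<integral>\<^sup>+p. h p \<partial>distr M (P \<Otimes>\<^sub>M S) (\<lambda>x. (X x, Y x)))"
    by (subst nn_integral_distr) (auto intro: h XY)
  also have "\<dots> = (\<integral>\<^sup>+p. h p \<partial>(distr M P X \<Otimes>\<^sub>M distr M S Y))" by (simp add: eq)
  also have "\<dots> = (\<integral>\<^sup>+x. \<integral>\<^sup>+s. h (x, s) \<partial>distr M S Y \<partial>distr M P X)"
    by (rule PY.nn_integral_fst[OF h', symmetric])
  also have "\<dots> = (\<integral>\<^sup>+\<omega>. \<integral>\<^sup>+s. h (X \<omega>, s) \<partial>distr M S Y \<partial>M)"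
  proof -
    have m: "(\<lambda>x. \<integral>\<^sup>+ s. h (x, s) \<partial>distr M S Y) \<in> borel_measurable P"
      using PY.borel_measurable_nn_integral_fst[OF h'] by simp
    show ?thesis using m by (simp add: nn_integral_distr rX)
  qed
  also have "\<dots> = (\<integral>\<^sup>+\<omega>. (\<integral>\<^sup>+\<omega>'. h (X \<omega>, Y \<omega>') \<partial>M) \<partial>M)"
  proof (rule nn_integral_cong)
    fix \<omega> assume "\<omega> \<in> space M"
    then have "X \<omega> \<in> space P" using rX by (auto simp: measurable_def)
    then show "(\<integral>\<^sup>+s. h (X \<omega>, s) \<partial>distr M S Y) = (\<integral>\<^sup>+\<omega>'. h (X \<omega>, Y \<omega>') \<partial>M)"
      by (subst nn_integral_distr) (auto intro: rY measurable_compose_Pair1[OF _ h])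
  qed
  finally show ?thesis .
qed

lemma past_sub:
  assumes prob: "prob_space M"
  and ind: "prob_space.indep_vars M (\<lambda>_. S) \<xi> UNIV"
  shows "sets (past M \<xi> S n) \<subseteq> sets M"
proof -
  interpret prob_space M by (rule prob)
  have xi: "\<And>i. \<xi> i \<in> measurable M S" using ind by (auto simp: indep_vars_def2)
  show ?thesis
    unfolding past_def by (rule sets_image_in_sets) (auto intro!: measurable_restrict xi)
qed

lemma past_meas:
  assumes prob: "prob_space M"
  and ind: "prob_space.indep_vars M (\<lambda>_. S) \<xi> UNIV"
  and X: "X \<in> measurable (past M \<xi> S n) P"
  shows "X \<in> measurable M P"
  using X measurable_mono[of P P "past M \<xi> S n" M] past_sub[OF prob ind, of n] by (auto simp: past_def)

lemma indep_past:
  assumes prob: "prob_space M"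
  and ind: "prob_space.indep_vars M (\<lambda>_. S) \<xi> UNIV"
  and X: "X \<in> measurable (past M \<xi> S n) P"
  and nj: "n \<le> j"
  shows "prob_space.indep_set M {X -` A \<inter> space M | A. A \<in> sets P} {\<xi> j -` A \<inter> space M | A. A \<in> sets S}"
proof -
  interpret prob_space M by (rule prob)
  define XA where "XA = (\<lambda>\<omega>. \<lambda>i\<in>{..<n}. \<xi> i \<omega>)"
  have xi: "\<And>i. \<xi> i \<in> measurable M S" using ind by (auto simp: indep_vars_def2)
  have 1: "indep_var (PiM {..<n} (\<lambda>_. S)) XA (PiM {j} (\<lambda>_. S)) (\<lambda>\<omega>. \<lambda>i\<in>{j}. \<xi> i \<omega>)"
    unfolding XA_def using nj by (intro indep_var_restrict[OF ind]) auto
  from 1 have 3: "indep_set (sigma_sets (space M) {XA -` A \<inter> space M | A. A \<in> sets (PiM {..<n} (\<lambda>_. S))})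
      (sigma_sets (space M) {(\<lambda>\<omega>. \<lambda>i\<in>{j}. \<xi> i \<omega>) -` A \<inter> space M | A. A \<in> sets (PiM {j} (\<lambda>_. S))})"
    unfolding indep_var_eq by simp
  have s1: "{X -` A \<inter> space M | A. A \<in> sets P} \<subseteq>
        sigma_sets (space M) {XA -` A \<inter> space M | A. A \<in> sets (PiM {..<n} (\<lambda>_. S))}"
  proof (safe)
    fix A assume "A \<in> sets P"
    then have "X -` A \<inter> space (past M \<xi> S n) \<in> sets (past M \<xi> S n)" using X by (rule measurable_sets[rotated])
    then show "X -` A \<inter> space M \<in> sigma_sets (space M) {XA -` A \<inter> space M | A. A \<in> sets (PiM {..<n} (\<lambda>_. S))}"
      unfolding past_def XA_def[symmetric] sets_vimage_algebra by simp
  qed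
  have s2: "{\<xi> j -` A \<inter> space M | A. A \<in> sets S} \<subseteq>
     sigma_sets (space M) {(\<lambda>\<omega>. \<lambda>i\<in>{j}. \<xi> i \<omega>) -` A \<inter> space M | A. A \<in> sets (PiM {j} (\<lambda>_. S))}"
  proof safe
    fix A assume A: "A \<in> sets S"
    have "(\<lambda>r. r j) -` A \<inter> space (PiM {j} (\<lambda>_. S)) \<in> sets (PiM {j} (\<lambda>_. S))"
      using A by (intro measurable_sets[OF measurable_component_singleton]) auto
    moreover have "\<xi> j -` A \<inter> space M = (\<lambda>\<omega>. \<lambda>i\<in>{j}. \<xi> i \<omega>) -` ((\<lambda>r. r j) -` A \<inter> space (PiM {j} (\<lambda>_. S))) \<inter> space M"
      using xi[of j] by (auto simp: space_PiM measurable_def)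
    ultimately show "\<xi> j -` A \<inter> space M \<in> sigma_sets (space M) {(\<lambda>\<omega>. \<lambda>i\<in>{j}. \<xi> i \<omega>) -` A \<inter> space M | A. A \<in> sets (PiM {j} (\<lambda>_. S))}"
      by blast
  qed
  show ?thesis
    using 3 unfolding indep_set_def
    by (rule indep_sets_mono_sets) (use s1 s2 in \<open>auto split: bool.split\<close>)
qed



lemma norm_diff_scale_sq:
  fixes d e :: "'v::real_inner"
  shows "(norm (d - t *\<^sub>R e))\<^sup>2 = (norm d)\<^sup>2 - 2 * t * (d \<bullet> e) + t\<^sup>2 * (norm e)\<^sup>2"
  unfolding power2_norm_eq_inner
  by (simp add: inner_diff_left inner_diff_right inner_commute power2_eq_square algebra_simps)

lemma bias_var:
  fixes Y :: "'w \<Rightarrow> 'v::euclidean_space"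
  assumes prob: "prob_space M"
  and int: "integrable M Y" and mean: "integral\<^sup>L M Y = m"
  and var: "(\<integral>\<^sup>+\<omega>. ennreal ((norm (Y \<omega> - m))\<^sup>2) \<partial>M) \<le> ennreal s2"
  and s2: "0 \<le> s2"
  shows "(\<integral>\<^sup>+\<omega>. ennreal ((norm (c - \<tau> *\<^sub>R Y \<omega>))\<^sup>2) \<partial>M) \<le> ennreal ((norm (c - \<tau> *\<^sub>R m))\<^sup>2 + \<tau>\<^sup>2 * s2)"
proof -
  interpret prob_space M by (rule prob)
  have Ym: "Y \<in> borel_measurable M" using int by auto
  define f where "f \<omega> = (norm (Y \<omega> - m))\<^sup>2" for \<omega>
  have fm: "f \<in> borel_measurable M" unfolding f_def
    by (rule borel_measurable_continuous_on[OF _ Ym, where f="\<lambda>y. (norm (y - m))\<^sup>2"]) (intro continuous_intros)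
  have fin: "(\<integral>\<^sup>+\<omega>. ennreal (f \<omega>) \<partial>M) < \<infinity>"
    using le_less_trans[OF var ennreal_less_top] by (simp add: f_def)
  have fi: "integrable M f"
    unfolding integrable_iff_bounded using fin fm by (simp add: f_def)
  have fle: "integral\<^sup>L M f \<le> s2"
  proof -
    have "ennreal (integral\<^sup>L M f) = (\<integral>\<^sup>+\<omega>. ennreal (f \<omega>) \<partial>M)"
      by (rule nn_integral_eq_integral[symmetric]) (use fi in \<open>auto simp: f_def\<close>)
    also have "\<dots> \<le> ennreal s2" using var by (simp add: f_def)
    finally show ?thesis using s2 by (simp add: ennreal_le_iff)
  qed
  define d where "d = c - \<tau> *\<^sub>R m"
  have eq: "(norm (c - \<tau> *\<^sub>R Y \<omega>))\<^sup>2 = (norm d)\<^sup>2 - 2 * \<tau> * (d \<bullet> (Y \<omega> - m)) + \<tau>\<^sup>2 * f \<omega>" for \<omega>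
  proof -
    have "c - \<tau> *\<^sub>R Y \<omega> = d - \<tau> *\<^sub>R (Y \<omega> - m)" by (simp add: d_def algebra_simps)
    then show ?thesis
      by (simp add: f_def norm_diff_scale_sq)
  qed
  have Ymi: "integrable M (\<lambda>\<omega>. Y \<omega> - m)" using int by auto
  have i2: "integrable M (\<lambda>\<omega>. (norm d)\<^sup>2 - 2 * \<tau> * (d \<bullet> (Y \<omega> - m)) + \<tau>\<^sup>2 * f \<omega>)"
  proof -
    have a: "integrable M (\<lambda>\<omega>. 2 * \<tau> * (d \<bullet> (Y \<omega> - m)))"
      using Ymi by (intro integrable_mult_right integrable_inner_right) auto
    have b: "integrable M (\<lambda>\<omega>. \<tau>\<^sup>2 * f \<omega>)"
      using fi by (intro integrable_mult_right) auto
    have c: "integrable M (\<lambda>\<omega>. (norm d)\<^sup>2)" by simp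
    show ?thesis by (rule Bochner_Integration.integrable_add[OF Bochner_Integration.integrable_diff[OF c a] b])
  qed
  have "integral\<^sup>L M (\<lambda>\<omega>. Y \<omega> - m) = 0" using int mean by (simp add: prob_space)
  then have ival: "(\<integral>\<omega>. (norm d)\<^sup>2 - 2 * \<tau> * (d \<bullet> (Y \<omega> - m)) + \<tau>\<^sup>2 * f \<omega> \<partial>M) = (norm d)\<^sup>2 + \<tau>\<^sup>2 * integral\<^sup>L M f"
    using Ymi fi by (simp add: integral_add integral_diff prob_space)
  have "(\<integral>\<^sup>+\<omega>. ennreal ((norm (c - \<tau> *\<^sub>R Y \<omega>))\<^sup>2) \<partial>M) =
        (\<integral>\<^sup>+\<omega>. ennreal ((norm d)\<^sup>2 - 2 * \<tau> * (d \<bullet> (Y \<omega> - m)) + \<tau>\<^sup>2 * f \<omega>) \<partial>M)"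
    by (simp add: eq)
  also have "\<dots> = ennreal (\<integral>\<omega>. (norm d)\<^sup>2 - 2 * \<tau> * (d \<bullet> (Y \<omega> - m)) + \<tau>\<^sup>2 * f \<omega> \<partial>M)"
    by (rule nn_integral_eq_integral[OF i2]) (auto simp: eq[symmetric])
  also have "\<dots> = ennreal ((norm d)\<^sup>2 + \<tau>\<^sup>2 * integral\<^sup>L M f)"
    by (simp only: ival)
  also have "\<dots> \<le> ennreal ((norm d)\<^sup>2 + \<tau>\<^sup>2 * s2)"
    using fle by (intro ennreal_leI add_left_mono mult_left_mono) auto
  finally show ?thesis by (simp add: d_def)
qed


lemma res_nonexp:
  fixes A :: "'a::real_inner \<Rightarrow> 'a set"
  assumes mon: "monotone_op A" and tau: "\<tau> > 0"
  and p: "p \<in> resolvent (scale_op \<tau> A) x" and q: "q \<in> resolvent (scale_op \<tau> A) y"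
  shows "norm (p - q) \<le> norm (x - y)"
proof -
  obtain u where u: "u \<in> A p" "x - p = \<tau> *\<^sub>R u" using p by (auto simp: resolvent_def scale_op_def)
  obtain v where v: "v \<in> A q" "y - q = \<tau> *\<^sub>R v" using q by (auto simp: resolvent_def scale_op_def)
  have "inner (u - v) (p - q) \<ge> 0" using mon u v unfolding monotone_op_def by blast
  then have "inner (\<tau> *\<^sub>R (u - v)) (p - q) \<ge> 0" using tau by simp
  moreover have "\<tau> *\<^sub>R (u - v) = (x - y) - (p - q)" using u v by (simp add: algebra_simps)
  ultimately have "inner (x - y) (p - q) \<ge> inner (p - q) (p - q)" by (simp add: inner_diff_left)
  then have "(norm (p - q))\<^sup>2 \<le> norm (x - y) * norm (p - q)"
    using Cauchy_Schwarz_ineq2[of "x - y" "p - q"] by (simp add: power2_norm_eq_inner)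
  then show ?thesis
    by (cases "norm (p - q) = 0") (auto simp: power2_eq_square)
qed

lemma det_step:
  fixes A :: "'a::real_inner \<Rightarrow> 'a set" and B :: "'a \<Rightarrow> 'a"
  assumes mon: "monotone_op A" and tau: "\<tau> > 0"
  and lip: "\<And>x y. norm (B x - B y) \<le> L * norm (x - y)" and L: "L \<ge> 0"
  and sm: "\<And>x y. inner (B x - B y) (x - y) \<ge> \<mu> * (norm (x - y))\<^sup>2" and mu: "\<mu> \<ge> 0"
  and zs: "- B zs \<in> A zs"
  and cond: "2 * \<tau> * \<mu> + 2 * \<tau>\<^sup>2 * L\<^sup>2 \<le> 1"
  and w: "w \<in> resolvent (scale_op \<tau> A) (z - \<tau> *\<^sub>R g)"
  shows "(norm (w + \<tau> *\<^sub>R g - \<tau> *\<^sub>R B w - zs))\<^sup>2 \<le> (1 - \<tau> * \<mu>) * (norm (z - zs))\<^sup>2 + 2 * \<tau>\<^sup>2 * (norm (g - B z))\<^sup>2"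
proof -
  define zp where "zp = w + \<tau> *\<^sub>R g - \<tau> *\<^sub>R B w"
  obtain a where a: "a \<in> A w" "z - \<tau> *\<^sub>R g - w = \<tau> *\<^sub>R a" using w by (auto simp: resolvent_def scale_op_def)
  have "inner (a - (- B zs)) (w - zs) \<ge> 0" using mon a zs unfolding monotone_op_def by blast
  then have m1: "inner (\<tau> *\<^sub>R a + \<tau> *\<^sub>R B zs) (w - zs) \<ge> 0" using tau
    by (simp add: scaleR_add_right[symmetric] del: scaleR_add_right)
  have zzp: "z - zp = (\<tau> *\<^sub>R a + \<tau> *\<^sub>R B zs) + \<tau> *\<^sub>R (B w - B zs)"
    using a(2) by (simp add: zp_def algebra_simps)
  have "inner (z - zp) (w - zs) = inner (\<tau> *\<^sub>R a + \<tau> *\<^sub>R B zs) (w - zs) + \<tau> * inner (B w - B zs) (w - zs)"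
    unfolding zzp by (simp add: inner_add_left)
  also have "\<dots> \<ge> \<tau> * (\<mu> * (norm (w - zs))\<^sup>2)"
    using m1 sm[of w zs] tau by (simp add: add_increasing)
  finally have i1: "inner (z - zp) (w - zs) \<ge> \<tau> * (\<mu> * (norm (w - zs))\<^sup>2)" .
  have ident: "(norm (zp - zs))\<^sup>2 = (norm (z - zs))\<^sup>2 - 2 * inner (z - zp) (w - zs) - (norm (z - w))\<^sup>2 + (norm (zp - w))\<^sup>2"
    unfolding power2_norm_eq_inner
    by (simp add: inner_diff_left inner_diff_right inner_commute algebra_simps)
  have zpw: "zp - w = \<tau> *\<^sub>R (g - B w)" by (simp add: zp_def algebra_simps)
  have n1: "(norm (g - B w))\<^sup>2 \<le> 2 * (norm (g - B z))\<^sup>2 + 2 * (norm (B z - B w))\<^sup>2"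
  proof -
    have "norm (g - B w) \<le> norm (g - B z) + norm (B z - B w)"
      using norm_triangle_ineq[of "g - B z" "B z - B w"] by simp
    then have "(norm (g - B w))\<^sup>2 \<le> (norm (g - B z) + norm (B z - B w))\<^sup>2"
      by (intro power_mono) auto
    also have "\<dots> \<le> 2 * (norm (g - B z))\<^sup>2 + 2 * (norm (B z - B w))\<^sup>2"
      by (smt (verit) sum_squares_bound zero_le_power2 power2_sum) 
    finally show ?thesis .
  qed
  have n2: "(norm (B z - B w))\<^sup>2 \<le> L\<^sup>2 * (norm (z - w))\<^sup>2"
  proof -
    have "norm (B z - B w) \<le> L * norm (z - w)" by (rule lip)
    then have "(norm (B z - B w))\<^sup>2 \<le> (L * norm (z - w))\<^sup>2" by (intro power_mono) auto
    then show ?thesis by (simp add: power_mult_distrib)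
  qed
  have n3: "(norm (z - zs))\<^sup>2 \<le> 2 * (norm (w - zs))\<^sup>2 + 2 * (norm (z - w))\<^sup>2"
  proof -
    have "norm (z - zs) \<le> norm (w - zs) + norm (z - w)"
      using norm_triangle_ineq[of "w - zs" "z - w"] by simp
    then have "(norm (z - zs))\<^sup>2 \<le> (norm (w - zs) + norm (z - w))\<^sup>2"
      by (intro power_mono) auto
    also have "\<dots> \<le> 2 * (norm (w - zs))\<^sup>2 + 2 * (norm (z - w))\<^sup>2"
      by (smt (verit) sum_squares_bound zero_le_power2 power2_sum) 
    finally show ?thesis .
  qed
  define X where "X = (norm (z - zs))\<^sup>2"
  define W where "W = (norm (w - zs))\<^sup>2"
  define D where "D = (norm (z - w))\<^sup>2"
  define G where "G = (norm (g - B z))\<^sup>2"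
  define H where "H = (norm (g - B w))\<^sup>2"
  have t2: "\<tau>\<^sup>2 \<ge> 0" by simp
  have e1: "(norm (zp - zs))\<^sup>2 \<le> X - 2 * (\<tau> * (\<mu> * W)) - D + \<tau>\<^sup>2 * H"
    using ident i1 zpw by (simp add: X_def W_def D_def H_def power_mult_distrib)
  have e2: "\<tau>\<^sup>2 * H \<le> \<tau>\<^sup>2 * (2 * G + 2 * (L\<^sup>2 * D))"
    using n1 n2 unfolding H_def G_def D_def by (intro mult_left_mono) auto
  have e3: "\<tau> * \<mu> * X \<le> \<tau> * \<mu> * (2 * W + 2 * D)"
    using n3 tau mu unfolding X_def W_def D_def by (intro mult_left_mono) auto
  have e4: "(2 * \<tau> * \<mu> + 2 * \<tau>\<^sup>2 * L\<^sup>2) * D \<le> 1 * D"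
    using cond unfolding D_def by (intro mult_right_mono) auto
  have "(norm (zp - zs))\<^sup>2 \<le> (1 - \<tau> * \<mu>) * X + 2 * \<tau>\<^sup>2 * G"
    using e1 e2 e3 e4 by (simp add: algebra_simps)
  then show ?thesis by (simp add: zp_def X_def G_def)
qed

lemma meas_sqnorm:
  fixes F :: "'a \<Rightarrow> 'v::euclidean_space"
  assumes "F \<in> borel_measurable K"
  shows "(\<lambda>x. ennreal ((norm (F x))\<^sup>2)) \<in> borel_measurable K"
proof -
  have "(\<lambda>x. (norm (F x))\<^sup>2) \<in> borel_measurable K"
    by (rule borel_measurable_continuous_on[where f="\<lambda>v. (norm v)\<^sup>2", OF _ assms]) (intro continuous_intros)
  then show ?thesis by simp
qed

lemma rec_e1:
  fixes a C :: real assumes b: "a > 0"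
  shows "(1 - 2 / (a + 1)) * (C / a) = C / (a + 1) - C / (a * (a + 1))"
proof -
  have n: "a + 1 \<noteq> 0" "a \<noteq> 0" using b by auto
  have "(1 - 2 / (a + 1)) = (a - 1) / (a + 1)" using n by (simp add: field_simps)
  moreover have "C / (a + 1) - C / (a * (a + 1)) = C * (a - 1) / (a * (a + 1))"
  proof -
    have "C / (a + 1) = C * a / (a * (a + 1))" using n by simp
    then have "C / (a + 1) - C / (a * (a + 1)) = (C * a - C) / (a * (a + 1))"
      by (simp add: diff_divide_distrib)
    then show ?thesis by (simp add: algebra_simps)
  qed
  ultimately show ?thesis by (simp add: mult.commute)
qed

lemma rec_e2:
  fixes a C K :: real assumes b: "a > 0" and h: "12 * K * a \<le> C * (a + 1)"
  shows "12 * K / (a + 1)\<^sup>2 \<le> C / (a * (a + 1))"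
proof -
  have "12*K*a/(a*(a+1)) \<le> C*(a+1)/(a*(a+1))" using h b by (intro divide_right_mono) auto
  then have "12*K/(a+1) \<le> C/a" using b by simp
  then have "(12*K/(a+1))/(a+1) \<le> (C/a)/(a+1)" using b by (intro divide_right_mono) auto
  then show ?thesis by (simp add: power2_eq_square)
qed

lemma rec_ineq:
  fixes a C K :: real
  assumes a: "a \<ge> 6" and K: "K \<ge> 0" and C: "C \<ge> 48 * K"
  shows "(1 - 2 / (a + 1)) * (C / a) + 12 * K / (a + 1)\<^sup>2 \<le> C / (a + 1)"
proof -
  have b: "a + 1 > 0" "a > 0" using a by auto
  have h: "12 * K * a \<le> C * (a + 1)"
  proof -
    have "12 * K * a \<le> 48 * K * (a + 1)" using K a by (intro mult_mono) auto
    also have "\<dots> \<le> C * (a + 1)" using C b by (intro mult_right_mono) auto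
    finally show ?thesis .
  qed
  show ?thesis using rec_e1[OF b(2), of C] rec_e2[OF b(2) h] by simp
qed

theorem theoremC1:
  fixes A :: "real ^ 'd \<Rightarrow> (real ^ 'd) set"
    and B :: "real ^ 'd \<Rightarrow> real ^ 'd"
    and L \<mu> \<sigma> :: real
    and zs z0 :: "real ^ 'd"
    and M :: "'w measure"
    and S :: "'s measure"
    and \<xi> :: "nat \<Rightarrow> 'w \<Rightarrow> 's"
    and Bt :: "real ^ 'd \<Rightarrow> 's \<Rightarrow> real ^ 'd"
    and z zh :: "nat \<Rightarrow> 'w \<Rightarrow> real ^ 'd"
    and T :: nat
  defines "\<tau> \<equiv> (\<lambda>t::nat. 2 / ((real t + 1) * \<mu> + 6 * L))"
  assumes maxmon: "maximal_monotone A"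
    and lip: "L-lipschitz_on UNIV B"
    and strmon: "strongly_monotone \<mu> B"
    and mu_pos: "\<mu> > 0"
    and zero: "0 \<in> {u + B zs | u. u \<in> A zs}"
    and prob: "prob_space M"
    and indep: "prob_space.indep_vars M (\<lambda>_. S) \<xi> UNIV"
    and Bt_meas: "(\<lambda>(x, s). Bt x s) \<in> borel_measurable (borel \<Otimes>\<^sub>M S)"
    and unbiased: "\<And>i x. integrable M (\<lambda>\<omega>. Bt x (\<xi> i \<omega>)) \<and>
                            (\<integral>\<omega>. Bt x (\<xi> i \<omega>) \<partial>M) = B x"
    and variance: "\<And>i x. (\<integral>\<^sup>+\<omega>. ennreal ((norm (Bt x (\<xi> i \<omega>) - B x))\<^sup>2) \<partial>M)
                            \<le> ennreal (\<sigma>\<^sup>2)"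
    and init: "\<And>\<omega>. \<omega> \<in> space M \<Longrightarrow> z 0 \<omega> = z0"
    and half_step: "\<And>t \<omega>. t < T \<Longrightarrow> \<omega> \<in> space M \<Longrightarrow>
           zh t \<omega> \<in> resolvent (scale_op (\<tau> t) A)
                       (z t \<omega> - \<tau> t *\<^sub>R Bt (z t \<omega>) (\<xi> (2 * t) \<omega>))"
    and full_step: "\<And>t \<omega>. t < T \<Longrightarrow> \<omega> \<in> space M \<Longrightarrow>
           z (Suc t) \<omega> = zh t \<omega> + \<tau> t *\<^sub>R Bt (z t \<omega>) (\<xi> (2 * t) \<omega>)
                                  - \<tau> t *\<^sub>R Bt (zh t \<omega>) (\<xi> (2 * t + 1) \<omega>)"
    and z_meas: "\<And>t. t \<le> T \<Longrightarrow> z t \<in> borel_measurable M"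
    and zh_meas: "\<And>t. t < T \<Longrightarrow> zh t \<in> borel_measurable M"
  shows "(\<integral>\<^sup>+\<omega>. ennreal ((norm (z T \<omega> - zs))\<^sup>2) \<partial>M)
           \<le> ennreal (((6 * L / \<mu>) * (norm (z0 - zs))\<^sup>2 + 48 * \<sigma>\<^sup>2 / \<mu>\<^sup>2)
                      / (real T + 6 * L / \<mu>))"
proof -
  interpret P: prob_space M by (rule prob)
  have xi: "\<And>i. \<xi> i \<in> measurable M S" using indep by (auto simp: P.indep_vars_def2)
  have L0: "L \<ge> 0" using lip by (auto simp: lipschitz_on_def)
  have lipB: "\<And>x y. norm (B x - B y) \<le> L * norm (x - y)"
    using lip by (auto simp: lipschitz_on_def dist_norm)
  have smB: "\<And>x y. inner (B x - B y) (x - y) \<ge> \<mu> * (norm (x - y))\<^sup>2"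
    using strmon by (auto simp: strongly_monotone_def)
  have muL: "\<mu> \<le> L"
  proof -
    define e :: "real ^ 'd" where "e = vec 1"
    have e0: "e \<noteq> 0" by (simp add: e_def vec_eq_iff)
    have "\<mu> * (norm e)\<^sup>2 \<le> inner (B e - B 0) (e - 0)" using smB[of e 0] by simp
    also have "\<dots> \<le> norm (B e - B 0) * norm (e - 0)" by (rule norm_cauchy_schwarz)
    also have "\<dots> \<le> L * norm (e - 0) * norm (e - 0)"
      by (intro mult_right_mono lipB) auto
    finally have "\<mu> * (norm e)\<^sup>2 \<le> L * (norm e)\<^sup>2" by (simp add: power2_eq_square)
    moreover have "(norm e)\<^sup>2 > 0" using e0 by simp
    ultimately show ?thesis by simp
  qed
  have mon: "monotone_op A" using maxmon by (simp add: maximal_monotone_def)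
  have zsA: "- B zs \<in> A zs"
  proof -
    obtain u where "0 = u + B zs" "u \<in> A zs" using zero by auto
    then have "u = - B zs" by (simp add: eq_neg_iff_add_eq_0)
    with \<open>u \<in> A zs\<close> show ?thesis by simp
  qed
  define den where "den t = (real t + 1) * \<mu> + 6 * L" for t
  have den_pos: "den t > 0" for t unfolding den_def using mu_pos L0
    by (simp add: add_pos_nonneg)
  have tau_pos: "\<tau> t > 0" for t using den_pos[of t] by (simp add: \<tau>_def den_def[symmetric])
  have tau_den: "\<tau> t * den t = 2" for t using den_pos[of t] by (simp add: \<tau>_def den_def[symmetric])
  have tmu: "\<tau> t * \<mu> \<le> 2 / 7" for t
  proof -
    have "7 * \<mu> \<le> den t" unfolding den_def using muL mu_pos
      by (simp add: algebra_simps) (smt (verit) mult_nonneg_nonneg of_nat_0_le_iff)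
    then have "\<tau> t * (7 * \<mu>) \<le> \<tau> t * den t" using tau_pos[of t] by (intro mult_left_mono) auto
    then show ?thesis using tau_den[of t] by simp
  qed
  have tL: "\<tau> t * L \<le> 1 / 3" for t
  proof -
    have "6 * L \<le> den t" unfolding den_def using mu_pos by simp
    then have "\<tau> t * (6 * L) \<le> \<tau> t * den t" using tau_pos[of t] by (intro mult_left_mono) auto
    then show ?thesis using tau_den[of t] by (simp add: algebra_simps)
  qed
  have cond: "2 * \<tau> t * \<mu> + 2 * (\<tau> t)\<^sup>2 * L\<^sup>2 \<le> 1" for t
  proof -
    have "(\<tau> t * L)\<^sup>2 \<le> (1/3)\<^sup>2" using tL[of t] tau_pos[of t] L0 by (intro power_mono) auto
    then have "(\<tau> t)\<^sup>2 * L\<^sup>2 \<le> 1/9" by (simp add: power_mult_distrib power_divide)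
    then show ?thesis using tmu[of t] by simp
  qed
  have Bm: "B \<in> borel_measurable borel"
    using lip by (intro borel_measurable_continuous_onI lipschitz_on_continuous_on) 
  define Ps where "Ps n = past M \<xi> S n" for n
  have sp: "space (Ps n) = space M" for n by (simp add: Ps_def past_def)
  have xiP: "\<xi> i \<in> measurable (Ps n) S" if "i < n" for i n
  proof -
    have XM: "(\<lambda>\<omega>. \<lambda>i\<in>{..<n}. \<xi> i \<omega>) \<in> measurable M (PiM {..<n} (\<lambda>_. S))"
      by (intro measurable_restrict xi)
    have X: "(\<lambda>\<omega>. \<lambda>i\<in>{..<n}. \<xi> i \<omega>) \<in> measurable (Ps n) (PiM {..<n} (\<lambda>_. S))"
      unfolding Ps_def past_def
      by (rule measurable_vimage_algebra1) (use measurable_space[OF XM] in blast)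
    have "(\<lambda>\<omega>. (\<lambda>r. r i) ((\<lambda>\<omega>. \<lambda>i\<in>{..<n}. \<xi> i \<omega>) \<omega>)) \<in> measurable (Ps n) S"
      by (rule measurable_compose[OF X]) (use that in auto)
    then show ?thesis using that by simp
  qed
  have pmono: "f \<in> measurable (Ps m) K" if "f \<in> measurable (Ps n) K" "n \<le> m" for f n m and K :: "'b measure"
  proof -
    have X: "(\<lambda>\<omega>. \<lambda>i\<in>{..<n}. \<xi> i \<omega>) \<in> measurable (Ps m) (PiM {..<n} (\<lambda>_. S))"
      by (rule measurable_restrict) (use that in \<open>auto intro: xiP\<close>)
    have "sets (Ps n) \<subseteq> sets (Ps m)"
      unfolding Ps_def[of n] past_def by (rule sets_image_in_sets) (use X sp in auto)
    then show ?thesis using that(1) measurable_mono[of K K "Ps n" "Ps m"] by (auto simp: sp)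
  qed
  have pM: "f \<in> measurable M K" if "f \<in> measurable (Ps n) K" for f n and K :: "'b measure"
    using past_meas[OF prob indep] that by (simp add: Ps_def)
  define R where "R t x = resolvent (scale_op (\<tau> t) A) x" for t x
  define J where "J t x = (THE p. p \<in> R t x)" for t x
  have Juniq: "p = J t x" if "p \<in> R t x" for t x p
  proof -
    have uq: "\<And>q. q \<in> R t x \<Longrightarrow> q = p"
      using res_nonexp[OF mon tau_pos[of t]] that by (fastforce simp: R_def)
    have "(THE p'. p' \<in> R t x) = p"
    proof (rule the_equality)
      show "p \<in> R t x" by (rule that)
    next
      fix q assume "q \<in> R t x" then show "q = p" by (rule uq)
    qed
    then show ?thesis unfolding J_def by simp
  qed
  have Jcont: "continuous_on {x. R t x \<noteq> {}} (J t)" for t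
  proof (rule lipschitz_on_continuous_on)
    show "1-lipschitz_on {x. R t x \<noteq> {}} (J t)"
    proof (rule lipschitz_onI)
      fix x y assume "x \<in> {x. R t x \<noteq> {}}" "y \<in> {x. R t x \<noteq> {}}"
      then obtain p q where p: "p \<in> R t x" and q: "q \<in> R t y" by auto
      have "norm (p - q) \<le> norm (x - y)" using res_nonexp[OF mon tau_pos[of t]] p q by (simp add: R_def)
      then show "dist (J t x) (J t y) \<le> 1 * dist x y"
        using Juniq[OF p] Juniq[OF q] by (simp add: dist_norm)
    qed simp
  qed
  define g where "g t \<omega> = Bt (z t \<omega>) (\<xi> (2 * t) \<omega>)" for t \<omega>
  have gP: "g t \<in> borel_measurable (Ps (2 * t + 1))" if "z t \<in> borel_measurable (Ps (2 * t))" for t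
  proof -
    have "(\<lambda>\<omega>. (z t \<omega>, \<xi> (2 * t) \<omega>)) \<in> measurable (Ps (2 * t + 1)) (borel \<Otimes>\<^sub>M S)"
      by (intro measurable_Pair pmono[OF that] xiP) auto
    from measurable_compose[OF this Bt_meas] show ?thesis by (simp add: g_def[abs_def])
  qed
  have stepP: "zh t \<in> borel_measurable (Ps (2 * t + 1)) \<and> z (Suc t) \<in> borel_measurable (Ps (2 * Suc t))"
    if t: "t < T" and zt: "z t \<in> borel_measurable (Ps (2 * t))" for t
  proof
    define u where "u \<omega> = z t \<omega> - \<tau> t *\<^sub>R g t \<omega>" for \<omega>
    have um: "u \<in> borel_measurable (Ps (2 * t + 1))"
      unfolding u_def[abs_def] using pmono[OF zt] gP[OF zt]
      by (intro borel_measurable_diff borel_measurable_scaleR borel_measurable_const) auto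
    have uD: "u \<in> space (Ps (2 * t + 1)) \<rightarrow> {x. R t x \<noteq> {}}"
    proof
      fix \<omega> assume "\<omega> \<in> space (Ps (2 * t + 1))"
      then have "zh t \<omega> \<in> R t (u \<omega>)" using half_step[OF t] by (simp add: sp u_def g_def R_def)
      then show "u \<omega> \<in> {x. R t x \<noteq> {}}" by auto
    qed
    have Jm: "(\<lambda>\<omega>. J t (u \<omega>)) \<in> borel_measurable (Ps (2 * t + 1))"
      by (rule measurable_compose[OF measurable_restrict_space2[OF uD um] borel_measurable_continuous_on_restrict[OF Jcont]])
    have eqJ: "J t (u \<omega>) = zh t \<omega>" if "\<omega> \<in> space (Ps (2 * t + 1))" for \<omega>
    proof -
      have "zh t \<omega> \<in> R t (u \<omega>)" using half_step[OF t] that by (simp add: sp u_def g_def R_def)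
      then show ?thesis by (rule Juniq[symmetric])
    qed
    show zhm: "zh t \<in> borel_measurable (Ps (2 * t + 1))"
      by (rule measurable_cong[THEN iffD1, OF eqJ Jm])
    have "(\<lambda>\<omega>. (zh t \<omega>, \<xi> (2 * t + 1) \<omega>)) \<in> measurable (Ps (2 * Suc t)) (borel \<Otimes>\<^sub>M S)"
      by (intro measurable_Pair pmono[OF zhm] xiP) auto
    from measurable_compose[OF this Bt_meas]
    have b2: "(\<lambda>\<omega>. Bt (zh t \<omega>) (\<xi> (2 * t + 1) \<omega>)) \<in> borel_measurable (Ps (2 * Suc t))" by simp
    have Zm: "(\<lambda>\<omega>. zh t \<omega> + \<tau> t *\<^sub>R g t \<omega> - \<tau> t *\<^sub>R Bt (zh t \<omega>) (\<xi> (2 * t + 1) \<omega>)) \<in> borel_measurable (Ps (2 * Suc t))"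
      using pmono[OF zhm] pmono[OF gP[OF zt]] b2
      by (intro borel_measurable_diff borel_measurable_add borel_measurable_scaleR borel_measurable_const) auto
    have eqZ: "zh t \<omega> + \<tau> t *\<^sub>R g t \<omega> - \<tau> t *\<^sub>R Bt (zh t \<omega>) (\<xi> (2 * t + 1) \<omega>) = z (Suc t) \<omega>"
      if "\<omega> \<in> space (Ps (2 * Suc t))" for \<omega>
      using full_step[OF t] that by (simp add: sp g_def)
    show "z (Suc t) \<in> borel_measurable (Ps (2 * Suc t))"
      by (rule measurable_cong[THEN iffD1, OF eqZ Zm])
  qed
  have zP: "z t \<in> borel_measurable (Ps (2 * t))" if "t \<le> T" for t
    using that
  proof (induction t)
    case 0
    have c0: "(\<lambda>\<omega>. z0) \<in> borel_measurable (Ps (2 * 0))" by simp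
    have e0: "z0 = z 0 \<omega>" if "\<omega> \<in> space (Ps (2 * 0))" for \<omega> using init that by (simp add: sp)
    show ?case by (rule measurable_cong[THEN iffD1, OF e0 c0])
  next
    case (Suc t)
    then show ?case using stepP[of t] by simp
  qed

  define E where "E t = (\<integral>\<^sup>+\<omega>. ennreal ((norm (z t \<omega> - zs))\<^sup>2) \<partial>M)" for t
  have varP: "(\<integral>\<^sup>+\<omega>. ennreal ((norm (g t \<omega> - B (z t \<omega>)))\<^sup>2) \<partial>M) \<le> ennreal (\<sigma>\<^sup>2)" if "t \<le> T" for t
  proof -
    have zm: "z t \<in> borel_measurable (Ps (2 * t))" by (rule zP[OF that])
    define h2 where "h2 p = ennreal ((norm (Bt (fst p) (snd p) - B (fst p)))\<^sup>2)" for p :: "(real^'d) \<times> 's"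
    have h2m: "h2 \<in> borel_measurable (borel \<Otimes>\<^sub>M S)"
    proof -
      have "(\<lambda>p. (fst p, snd p)) \<in> measurable (borel \<Otimes>\<^sub>M S) (borel \<Otimes>\<^sub>M S)"
        by (intro measurable_Pair measurable_fst measurable_snd)
      from measurable_compose[OF this Bt_meas]
      have "(\<lambda>p. Bt (fst p) (snd p)) \<in> borel_measurable (borel \<Otimes>\<^sub>M S)" by simp
      moreover have "(\<lambda>p. B (fst p)) \<in> borel_measurable (borel \<Otimes>\<^sub>M S)"
        by (rule measurable_compose[OF measurable_fst Bm])
      ultimately show ?thesis unfolding h2_def[abs_def]
        by (intro meas_sqnorm borel_measurable_diff)
    qed
    have "(\<integral>\<^sup>+\<omega>. ennreal ((norm (g t \<omega> - B (z t \<omega>)))\<^sup>2) \<partial>M) = (\<integral>\<^sup>+\<omega>. h2 (z t \<omega>, \<xi> (2 * t) \<omega>) \<partial>M)"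
      by (simp add: h2_def g_def)
    also have "\<dots> = (\<integral>\<^sup>+\<omega>. (\<integral>\<^sup>+\<omega>'. h2 (z t \<omega>, \<xi> (2 * t) \<omega>') \<partial>M) \<partial>M)"
      by (rule indep_fubini[OF prob pM[OF zm] xi indep_past[OF prob indep zm[unfolded Ps_def] le_refl] h2m])
    also have "\<dots> \<le> (\<integral>\<^sup>+\<omega>. ennreal (\<sigma>\<^sup>2) \<partial>M)"
      by (rule nn_integral_mono) (simp add: h2_def variance)
    also have "\<dots> = ennreal (\<sigma>\<^sup>2)" by (simp add: P.emeasure_space_1)
    finally show ?thesis .
  qed
  have step: "E (Suc t) \<le> ennreal (1 - \<tau> t * \<mu>) * E t + ennreal (3 * (\<tau> t)\<^sup>2 * \<sigma>\<^sup>2)" if t: "t < T" for t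
  proof -
    have zt: "z t \<in> borel_measurable (Ps (2 * t))" using zP t by simp
    have zhm: "zh t \<in> borel_measurable (Ps (2 * t + 1))" using stepP[OF t zt] by simp
    have gm: "g t \<in> borel_measurable (Ps (2 * t + 1))" by (rule gP[OF zt])
    define c where "c \<omega> = zh t \<omega> + \<tau> t *\<^sub>R g t \<omega> - zs" for \<omega>
    have cm: "c \<in> borel_measurable (Ps (2 * t + 1))" unfolding c_def[abs_def] using zhm gm
      by (intro borel_measurable_diff borel_measurable_add borel_measurable_scaleR borel_measurable_const) auto
    define X where "X \<omega> = (zh t \<omega>, c \<omega>)" for \<omega>
    have XP: "X \<in> measurable (Ps (2 * t + 1)) (borel \<Otimes>\<^sub>M borel)" unfolding X_def[abs_def] using zhm cm by (rule measurable_Pair)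
    define h where "h p = ennreal ((norm (snd (fst p) - \<tau> t *\<^sub>R Bt (fst (fst p)) (snd p)))\<^sup>2)"
      for p :: "((real^'d) \<times> (real^'d)) \<times> 's"
    have hm: "h \<in> borel_measurable ((borel \<Otimes>\<^sub>M borel) \<Otimes>\<^sub>M S)"
    proof -
      have "(\<lambda>p. (fst (fst p), snd p)) \<in> measurable ((borel \<Otimes>\<^sub>M borel) \<Otimes>\<^sub>M S) (borel \<Otimes>\<^sub>M S)"
        by (intro measurable_Pair measurable_compose[OF measurable_fst measurable_fst] measurable_snd)
      from measurable_compose[OF this Bt_meas]
      have "(\<lambda>p. Bt (fst (fst p)) (snd p)) \<in> borel_measurable ((borel \<Otimes>\<^sub>M borel) \<Otimes>\<^sub>M S)" by simp
      moreover have "(\<lambda>p. snd (fst p)) \<in> borel_measurable ((borel \<Otimes>\<^sub>M borel) \<Otimes>\<^sub>M S)"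
        by (intro measurable_compose[OF measurable_fst measurable_snd])
      ultimately show ?thesis unfolding h_def[abs_def]
        by (intro meas_sqnorm borel_measurable_diff borel_measurable_scaleR borel_measurable_const)
    qed
    have "E (Suc t) = (\<integral>\<^sup>+\<omega>. h (X \<omega>, \<xi> (2 * t + 1) \<omega>) \<partial>M)"
      unfolding E_def by (intro nn_integral_cong) (simp add: h_def X_def c_def full_step[OF t] g_def algebra_simps)
    also have "\<dots> = (\<integral>\<^sup>+\<omega>. (\<integral>\<^sup>+\<omega>'. h (X \<omega>, \<xi> (2 * t + 1) \<omega>') \<partial>M) \<partial>M)"
      by (rule indep_fubini[OF prob pM[OF XP] xi indep_past[OF prob indep XP[unfolded Ps_def] le_refl] hm])
    also have "\<dots> \<le> (\<integral>\<^sup>+\<omega>. ennreal ((norm (c \<omega> - \<tau> t *\<^sub>R B (zh t \<omega>)))\<^sup>2 + (\<tau> t)\<^sup>2 * \<sigma>\<^sup>2) \<partial>M)"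
    proof (rule nn_integral_mono)
      fix \<omega> assume "\<omega> \<in> space M"
      have ub: "integrable M (\<lambda>\<omega>'. Bt (zh t \<omega>) (\<xi> (2 * t + 1) \<omega>'))"
        "(\<integral>\<omega>'. Bt (zh t \<omega>) (\<xi> (2 * t + 1) \<omega>') \<partial>M) = B (zh t \<omega>)" using unbiased by auto
      show "(\<integral>\<^sup>+\<omega>'. h (X \<omega>, \<xi> (2 * t + 1) \<omega>') \<partial>M) \<le> ennreal ((norm (c \<omega> - \<tau> t *\<^sub>R B (zh t \<omega>)))\<^sup>2 + (\<tau> t)\<^sup>2 * \<sigma>\<^sup>2)"
        unfolding h_def[abs_def] X_def using bias_var[OF prob ub(1) ub(2) variance zero_le_power2] by simp
    qed
    also have "\<dots> \<le> (\<integral>\<^sup>+\<omega>. ennreal ((1 - \<tau> t * \<mu>) * (norm (z t \<omega> - zs))\<^sup>2 + 2 * (\<tau> t)\<^sup>2 * (norm (g t \<omega> - B (z t \<omega>)))\<^sup>2 + (\<tau> t)\<^sup>2 * \<sigma>\<^sup>2) \<partial>M)"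
    proof (rule nn_integral_mono)
      fix \<omega> assume \<omega>: "\<omega> \<in> space M"
      have eq: "c \<omega> - \<tau> t *\<^sub>R B (zh t \<omega>) = zh t \<omega> + \<tau> t *\<^sub>R g t \<omega> - \<tau> t *\<^sub>R B (zh t \<omega>) - zs"
        by (simp add: c_def algebra_simps)
      have "(norm (c \<omega> - \<tau> t *\<^sub>R B (zh t \<omega>)))\<^sup>2 \<le> (1 - \<tau> t * \<mu>) * (norm (z t \<omega> - zs))\<^sup>2 + 2 * (\<tau> t)\<^sup>2 * (norm (g t \<omega> - B (z t \<omega>)))\<^sup>2"
        unfolding eq g_def
        by (rule det_step[OF mon tau_pos lipB L0 smB less_imp_le[OF mu_pos] zsA cond half_step[OF t \<omega>]])
      then show "ennreal ((norm (c \<omega> - \<tau> t *\<^sub>R B (zh t \<omega>)))\<^sup>2 + (\<tau> t)\<^sup>2 * \<sigma>\<^sup>2) \<le> ennreal ((1 - \<tau> t * \<mu>) * (norm (z t \<omega> - zs))\<^sup>2 + 2 * (\<tau> t)\<^sup>2 * (norm (g t \<omega> - B (z t \<omega>)))\<^sup>2 + (\<tau> t)\<^sup>2 * \<sigma>\<^sup>2)"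
        by (intro ennreal_leI) simp
    qed
    also have "\<dots> = ennreal (1 - \<tau> t * \<mu>) * E t + ennreal (2 * (\<tau> t)\<^sup>2) * (\<integral>\<^sup>+\<omega>. ennreal ((norm (g t \<omega> - B (z t \<omega>)))\<^sup>2) \<partial>M) + ennreal ((\<tau> t)\<^sup>2 * \<sigma>\<^sup>2)"
    proof -
      have a0: "0 \<le> 1 - \<tau> t * \<mu>" using tmu[of t] by simp
      have m1: "(\<lambda>\<omega>. ennreal ((norm (z t \<omega> - zs))\<^sup>2)) \<in> borel_measurable M"
        using pM[OF zt] by (intro meas_sqnorm borel_measurable_diff borel_measurable_const) auto
      have m2: "(\<lambda>\<omega>. ennreal ((norm (g t \<omega> - B (z t \<omega>)))\<^sup>2)) \<in> borel_measurable M"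
        using pM[OF gm] measurable_compose[OF pM[OF zt] Bm]
        by (intro meas_sqnorm borel_measurable_diff) auto
      have "(\<integral>\<^sup>+\<omega>. ennreal ((1 - \<tau> t * \<mu>) * (norm (z t \<omega> - zs))\<^sup>2 + 2 * (\<tau> t)\<^sup>2 * (norm (g t \<omega> - B (z t \<omega>)))\<^sup>2 + (\<tau> t)\<^sup>2 * \<sigma>\<^sup>2) \<partial>M)
        = (\<integral>\<^sup>+\<omega>. (ennreal (1 - \<tau> t * \<mu>) * ennreal ((norm (z t \<omega> - zs))\<^sup>2) + ennreal (2 * (\<tau> t)\<^sup>2) * ennreal ((norm (g t \<omega> - B (z t \<omega>)))\<^sup>2)) + ennreal ((\<tau> t)\<^sup>2 * \<sigma>\<^sup>2) \<partial>M)"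
        using a0 by (intro nn_integral_cong) (simp add: ennreal_plus ennreal_mult)
      also have "\<dots> = (\<integral>\<^sup>+\<omega>. ennreal (1 - \<tau> t * \<mu>) * ennreal ((norm (z t \<omega> - zs))\<^sup>2) + ennreal (2 * (\<tau> t)\<^sup>2) * ennreal ((norm (g t \<omega> - B (z t \<omega>)))\<^sup>2) \<partial>M) + (\<integral>\<^sup>+\<omega>. ennreal ((\<tau> t)\<^sup>2 * \<sigma>\<^sup>2) \<partial>M)"
        using m1 m2 by (intro nn_integral_add) auto
      also have "(\<integral>\<^sup>+\<omega>. ennreal (1 - \<tau> t * \<mu>) * ennreal ((norm (z t \<omega> - zs))\<^sup>2) + ennreal (2 * (\<tau> t)\<^sup>2) * ennreal ((norm (g t \<omega> - B (z t \<omega>)))\<^sup>2) \<partial>M)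
         = (\<integral>\<^sup>+\<omega>. ennreal (1 - \<tau> t * \<mu>) * ennreal ((norm (z t \<omega> - zs))\<^sup>2) \<partial>M) + (\<integral>\<^sup>+\<omega>. ennreal (2 * (\<tau> t)\<^sup>2) * ennreal ((norm (g t \<omega> - B (z t \<omega>)))\<^sup>2) \<partial>M)"
        using m1 m2 by (intro nn_integral_add) auto
      also have "\<dots> = ennreal (1 - \<tau> t * \<mu>) * E t + ennreal (2 * (\<tau> t)\<^sup>2) * (\<integral>\<^sup>+\<omega>. ennreal ((norm (g t \<omega> - B (z t \<omega>)))\<^sup>2) \<partial>M)"
        unfolding E_def using m1 m2 by (simp add: nn_integral_cmult)
      also have "(\<integral>\<^sup>+\<omega>. ennreal ((\<tau> t)\<^sup>2 * \<sigma>\<^sup>2) \<partial>M) = ennreal ((\<tau> t)\<^sup>2 * \<sigma>\<^sup>2)"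
        by (simp add: P.emeasure_space_1)
      finally show ?thesis .
    qed
    also have "\<dots> \<le> ennreal (1 - \<tau> t * \<mu>) * E t + ennreal (2 * (\<tau> t)\<^sup>2) * ennreal (\<sigma>\<^sup>2) + ennreal ((\<tau> t)\<^sup>2 * \<sigma>\<^sup>2)"
      using varP[of t] t by (intro add_mono mult_left_mono order.refl) auto
    also have "\<dots> = ennreal (1 - \<tau> t * \<mu>) * E t + ennreal (3 * (\<tau> t)\<^sup>2 * \<sigma>\<^sup>2)"
    proof -
      have e1: "ennreal (2 * (\<tau> t)\<^sup>2) * ennreal (\<sigma>\<^sup>2) = ennreal (2 * (\<tau> t)\<^sup>2 * \<sigma>\<^sup>2)"
        by (rule ennreal_mult[symmetric]) auto
      have e2: "ennreal (2 * (\<tau> t)\<^sup>2 * \<sigma>\<^sup>2) + ennreal ((\<tau> t)\<^sup>2 * \<sigma>\<^sup>2) = ennreal (2 * (\<tau> t)\<^sup>2 * \<sigma>\<^sup>2 + (\<tau> t)\<^sup>2 * \<sigma>\<^sup>2)"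
        by (rule ennreal_plus[symmetric]) auto
      have e3: "ennreal (2 * (\<tau> t)\<^sup>2 * \<sigma>\<^sup>2 + (\<tau> t)\<^sup>2 * \<sigma>\<^sup>2) = ennreal (3 * (\<tau> t)\<^sup>2 * \<sigma>\<^sup>2)"
        by (rule arg_cong[where f=ennreal]) simp
      show ?thesis unfolding add.assoc e1 e2 e3 by (rule refl)
    qed
    finally show ?thesis .
  qed
  define C where "C = (6 * L / \<mu>) * (norm (z0 - zs))\<^sup>2 + 48 * \<sigma>\<^sup>2 / \<mu>\<^sup>2"
  define a where "a t = real t + 6 * L / \<mu>" for t
  have LM: "6 * L / \<mu> \<ge> 6" using muL mu_pos by (simp add: le_divide_eq)
  have a6: "a t \<ge> 6" for t using LM by (simp add: a_def)
  define K where "K = \<sigma>\<^sup>2 / \<mu>\<^sup>2"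
  have K0: "K \<ge> 0" by (simp add: K_def)
  have CK: "C \<ge> 48 * K" using L0 mu_pos by (simp add: C_def K_def)
  have C0: "C \<ge> 0" using CK K0 by simp
  have rec: "(1 - \<tau> t * \<mu>) * (C / a t) + 3 * (\<tau> t)\<^sup>2 * \<sigma>\<^sup>2 \<le> C / a (Suc t)" for t
  proof -
    have b: "a (Suc t) = a t + 1" by (simp add: a_def)
    have db: "den t = \<mu> * a (Suc t)" using mu_pos by (simp add: den_def a_def algebra_simps)
    have tt: "\<tau> t = 2 / (\<mu> * a (Suc t))" using db by (simp add: \<tau>_def den_def[symmetric])
    have tm: "\<tau> t * \<mu> = 2 / (a t + 1)" using mu_pos by (simp add: tt b)
    have t2: "3 * (\<tau> t)\<^sup>2 * \<sigma>\<^sup>2 = 12 * K / (a t + 1)\<^sup>2"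
      using mu_pos by (simp add: tt b K_def power2_eq_square field_simps)
    show ?thesis unfolding tm t2 b by (rule rec_ineq[OF a6 K0 CK])
  qed
  have bound: "E t \<le> ennreal (C / a t)" if "t \<le> T" for t
    using that
  proof (induction t)
    case 0
    have "E 0 = (\<integral>\<^sup>+\<omega>. ennreal ((norm (z0 - zs))\<^sup>2) \<partial>M)" unfolding E_def
      by (rule nn_integral_cong) (simp add: init)
    also have "\<dots> = ennreal ((norm (z0 - zs))\<^sup>2)" by (simp add: P.emeasure_space_1)
    also have "\<dots> \<le> ennreal (C / a 0)"
    proof (rule ennreal_leI)
      have "(norm (z0 - zs))\<^sup>2 * a 0 \<le> C" using K0 by (simp add: C_def a_def K_def mult.commute)
      then show "(norm (z0 - zs))\<^sup>2 \<le> C / a 0" using a6[of 0] by (simp add: le_divide_eq)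
    qed
    finally show ?case .
  next
    case (Suc t)
    then have t: "t < T" by simp
    have "E (Suc t) \<le> ennreal (1 - \<tau> t * \<mu>) * E t + ennreal (3 * (\<tau> t)\<^sup>2 * \<sigma>\<^sup>2)" by (rule step[OF t])
    also have "\<dots> \<le> ennreal (1 - \<tau> t * \<mu>) * ennreal (C / a t) + ennreal (3 * (\<tau> t)\<^sup>2 * \<sigma>\<^sup>2)"
      using Suc t by (intro add_mono mult_left_mono order.refl) auto
    also have "\<dots> = ennreal ((1 - \<tau> t * \<mu>) * (C / a t) + 3 * (\<tau> t)\<^sup>2 * \<sigma>\<^sup>2)"
    proof -
      have a0: "0 \<le> 1 - \<tau> t * \<mu>" using tmu[of t] by simp
      have c0: "0 \<le> C / a t" using C0 a6[of t] by simp
      have f1: "ennreal (1 - \<tau> t * \<mu>) * ennreal (C / a t) = ennreal ((1 - \<tau> t * \<mu>) * (C / a t))"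
        by (rule ennreal_mult[symmetric]) (use a0 c0 in auto)
      have f2: "ennreal ((1 - \<tau> t * \<mu>) * (C / a t)) + ennreal (3 * (\<tau> t)\<^sup>2 * \<sigma>\<^sup>2) = ennreal ((1 - \<tau> t * \<mu>) * (C / a t) + 3 * (\<tau> t)\<^sup>2 * \<sigma>\<^sup>2)"
        by (rule ennreal_plus[symmetric]) (use mult_nonneg_nonneg[OF a0 c0] in auto)
      show ?thesis unfolding f1 f2 by (rule refl)
    qed
    also have "\<dots> \<le> ennreal (C / a (Suc t))" by (rule ennreal_leI[OF rec])
    finally show ?case .
  qed
  show ?thesis using bound[of T] by (simp add: E_def C_def a_def)
qed

end
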